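(* Let $\theta\in\mathbb{F}_{q^3}^*$. The pencil of lines $T\mathcal S_\theta=\{TX: X\in\mathcal S_\theta\}$ consists entirely of Type II lines if $N(\theta)=1$, and otherwise consists entirely of Type III lines.
   Context: Let $q$ be a prime power, $\mathbb{F}_{q^3}^*=\mathbb{F}_{q^3}\setminus\{0\}$, and $N(x)=x^{q^2+q+1}$ the norm from $\mathbb{F}_{q^3}$ to $\mathbb{F}_q$. Points of $\mathrm{PG}(2,q^3)$ have homogeneous coordinates $(x,y,z)$ and lines $[a,b,c]$. Let $\phi$ be the collineation $(x,y,z)\mapsto(z^q,x^q,y^q)$, acting on lines by $[d,e,f]\mapsto[f^q,d^q,e^q]$, whose fixed points form the subplane $\mathcal P_{2,q}=\{(x,x^q,x^{q^2}):x\in\mathbb{F}_{q^3}^*\}$. A line has Type I, II or III according as its $\phi$-orbit is one line, three concurrent lines, or three non-concurrent lines (equivalently it meets $\mathcal P_{2,q}$ in $q+1$, $1$, or $0$ points). Let $T=(0,0,1)$. For $\theta\in\mathbb{F}_{q^3}^*$ let $\mathcal S_\theta=\{(x\theta,x^q,0):x\in\mathbb{F}_{q^3}^*\}$, a set of points on the line $[0,0,1]$. *)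

theory Defs
  imports Main "HOL-Computational_Algebra.Primes"
begin

text \<open>Homogeneous coordinates of points and lines of PG(2,F) are nonzero triples over
  the field F = F_{q^3} (a finite field type whose cardinality is q^3).\<close>

type_synonym 'a triple = "'a \<times> 'a \<times> 'a"

definition nonzero3 :: "'a::zero triple \<Rightarrow> bool" where
  "nonzero3 v \<longleftrightarrow> v \<noteq> (0, 0, 0)"

definition proj_eq :: "'a::field triple \<Rightarrow> 'a triple \<Rightarrow> bool" where
  "proj_eq u v \<longleftrightarrow> (\<exists>c. c \<noteq> 0 \<and> v = (c * fst u, c * fst (snd u), c * snd (snd u)))"

definition incident :: "'a::field triple \<Rightarrow> 'a triple \<Rightarrow> bool" where
  "incident l P \<longleftrightarrow> fst l * fst P + fst (snd l) * fst (snd P) + snd (snd l) * snd (snd P) = 0"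

definition norm3 :: "nat \<Rightarrow> 'a::field \<Rightarrow> 'a" where
  "norm3 q x = x ^ (q^2 + q + 1)"

definition phi_line :: "nat \<Rightarrow> 'a::field triple \<Rightarrow> 'a triple" where
  "phi_line q l = (snd (snd l) ^ q, fst l ^ q, fst (snd l) ^ q)"

definition concurrent3 :: "'a::field triple \<Rightarrow> 'a triple \<Rightarrow> 'a triple \<Rightarrow> bool" where
  "concurrent3 l1 l2 l3 \<longleftrightarrow>
     (\<exists>P. nonzero3 P \<and> incident l1 P \<and> incident l2 P \<and> incident l3 P)"

definition type_I :: "nat \<Rightarrow> 'a::field triple \<Rightarrow> bool" where
  "type_I q l \<longleftrightarrow> proj_eq l (phi_line q l)"

definition type_II :: "nat \<Rightarrow> 'a::field triple \<Rightarrow> bool" where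
  "type_II q l \<longleftrightarrow> \<not> type_I q l \<and>
     concurrent3 l (phi_line q l) (phi_line q (phi_line q l))"

definition type_III :: "nat \<Rightarrow> 'a::field triple \<Rightarrow> bool" where
  "type_III q l \<longleftrightarrow> \<not> type_I q l \<and>
     \<not> concurrent3 l (phi_line q l) (phi_line q (phi_line q l))"

definition T_pt :: "'a::field triple" where
  "T_pt = (0, 0, 1)"

definition S_theta :: "nat \<Rightarrow> 'a::field \<Rightarrow> 'a triple set" where
  "S_theta q \<theta> = {(x * \<theta>, x ^ q, 0) | x. x \<noteq> 0}"

text \<open>The line TX, for points T \<noteq> X: any (representative of the) line through both.\<close>
definition line_through :: "'a::field triple \<Rightarrow> 'a triple \<Rightarrow> 'a triple \<Rightarrow> bool" where
  "line_through l P Q \<longleftrightarrow> nonzero3 l \<and> incident l P \<and> incident l Q"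

end

theory Submission
  imports Defs
begin

lemma fin_field_pow_card:
  fixes x :: "'a::{field,finite}"
  shows "x ^ card (UNIV::'a set) = x"
proof (cases "x = 0")
  case True
  have "card (UNIV::'a set) > 0" by (simp add: finite_UNIV_card_ge_0)
  then show ?thesis using True by (simp add: power_0_left)
next
  case False
  let ?U = "UNIV - {0::'a}"
  have inj: "inj_on (\<lambda>y. x * y) ?U" using False by (auto simp: inj_on_def)
  have img: "(\<lambda>y. x * y) ` ?U = ?U"
  proof
    show "(\<lambda>y. x * y) ` ?U \<subseteq> ?U" using False by auto
    show "?U \<subseteq> (\<lambda>y. x * y) ` ?U"
    proof
      fix z assume "z \<in> ?U"
      then have "z = x * (z / x)" "z / x \<in> ?U" using False by auto
      then show "z \<in> (\<lambda>y. x * y) ` ?U" by blast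
    qed
  qed
  have "prod id ?U = prod id ((\<lambda>y. x * y) ` ?U)" using img by simp
  also have "\<dots> = prod (\<lambda>y. x * y) ?U" using prod.reindex[OF inj] by simp
  also have "\<dots> = x ^ card ?U * prod id ?U" by (simp add: prod.distrib)
  finally have eq: "prod id ?U = x ^ card ?U * prod id ?U" .
  have "prod id ?U \<noteq> 0" by (simp add: prod_zero_iff)
  with eq have "x ^ card ?U = 1" by simp
  moreover have "card ?U = card (UNIV::'a set) - 1" by (simp add: card_Diff_singleton)
  moreover have "card (UNIV::'a set) > 0" by (simp add: finite_UNIV_card_ge_0)
  ultimately show ?thesis
    by (metis One_nat_def Suc_pred mult.right_neutral power_Suc)
qed

theorem lemma2p3:
  fixes q :: nat and \<theta> :: "'a::{field,finite}"
  assumes "\<exists>p k. prime p \<and> k > 0 \<and> q = p ^ k"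
    and "card (UNIV :: 'a set) = q ^ 3"
    and "\<theta> \<noteq> 0"
  shows "\<forall>X \<in> S_theta q \<theta>. \<forall>l. line_through l T_pt X \<longrightarrow>
           (if norm3 q \<theta> = 1 then type_II q l else type_III q l)"
proof (intro ballI allI impI)
  fix X l assume XS: "X \<in> S_theta q \<theta>" and L: "line_through l T_pt X"
  obtain x where X: "X = (x * \<theta>, x ^ q, 0)" and x0: "x \<noteq> 0"
    using XS unfolding S_theta_def by blast
  obtain a b c where l: "l = (a, b, c)" by (cases l) auto
  have c0: "c = 0" using L unfolding line_through_def incident_def T_pt_def l by simp
  have eqX: "a * (x * \<theta>) + b * x ^ q = 0"
    using L unfolding line_through_def incident_def X l by (simp add: c0)
  have nz: "(a, b, 0) \<noteq> (0, 0, 0)" using L unfolding line_through_def nonzero3_def l c0 by simp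
  have xq: "x ^ q \<noteq> 0" using x0 by simp
  have a0: "a \<noteq> 0"
  proof
    assume "a = 0"
    then have "b * x ^ q = 0" using eqX by simp
    then have "b = 0" using xq x0 by simp
    with \<open>a = 0\<close> nz show False by simp
  qed
  have "(0::'a) \<noteq> 1" by simp
  have cardge: "card (UNIV :: 'a set) \<ge> 2"
  proof -
    have "{0::'a, 1} \<subseteq> UNIV" by simp
    then have "card {0::'a, 1} \<le> card (UNIV :: 'a set)" by (rule card_mono[OF finite_UNIV])
    then show ?thesis by simp
  qed
  have qpos: "q > 0"
  proof (rule ccontr)
    assume "\<not> q > 0" then have "q = 0" by simp
    with assms(2) cardge show False by simp
  qed
  have la: "fst l = a" "fst (snd l) = b" "snd (snd l) = 0" using l c0 by auto
  define n where "n = q^2 + q + 1"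
  have phi1: "phi_line q l = (0, a ^ q, b ^ q)"
    unfolding phi_line_def l c0 using qpos by simp
  have phi2: "phi_line q (phi_line q l) = ((b ^ q) ^ q, 0, (a ^ q) ^ q)"
    unfolding phi1 phi_line_def using qpos by (simp add: l c0)
  have notI: "\<not> type_I q l"
  proof
    assume "type_I q l"
    then obtain k where k: "k \<noteq> 0" "phi_line q l = (k * fst l, k * fst (snd l), k * snd (snd l))"
      unfolding type_I_def proj_eq_def by auto
    have "(0, a ^ q, b ^ q) = (k * a, k * b, k * c)" using k(2) phi1 unfolding l by simp
    then have "k * a = 0" by simp
    with k(1) a0 show False by simp
  qed
  define D where "D = a * a ^ q * (a ^ q) ^ q + b * b ^ q * (b ^ q) ^ q"
  have conc: "concurrent3 l (phi_line q l) (phi_line q (phi_line q l)) \<longleftrightarrow> D = 0"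
  proof
    assume "concurrent3 l (phi_line q l) (phi_line q (phi_line q l))"
    then obtain u v w where P: "(u, v, w) \<noteq> (0, 0, 0)"
      and i1: "a * u + b * v = 0" and i2: "a ^ q * v + b ^ q * w = 0"
      and i3: "(b ^ q) ^ q * u + (a ^ q) ^ q * w = 0"
      unfolding concurrent3_def nonzero3_def incident_def using qpos by (auto simp: phi_line_def la zero_power)
    show "D = 0"
    proof (rule ccontr)
      assume D0: "D \<noteq> 0"
      have aq: "a ^ q \<noteq> 0" using a0 by simp
      have u: "u = - b * v / a" using i1 a0 by (simp add: field_simps eq_neg_iff_add_eq_0)
      have v: "v = - (b ^ q) * w / a ^ q" using i2 aq by (simp add: field_simps eq_neg_iff_add_eq_0)
      have "u = b * b ^ q * w / (a * a ^ q)" using u v a0 aq by (simp add: field_simps)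
      with i3 have "(b ^ q) ^ q * (b * b ^ q * w / (a * a ^ q)) + (a ^ q) ^ q * w = 0" by simp
      then have "w * D = 0" unfolding D_def using a0 aq by (simp add: field_simps)
      then have "w = 0" using D0 by simp
      then have "v = 0" using v by simp
      then have "u = 0" using u by simp
      with P \<open>v = 0\<close> \<open>w = 0\<close> show False by simp
    qed
  next
    assume D0: "D = 0"
    let ?P = "(b * b ^ q, - a * b ^ q, a * a ^ q)"
    have "nonzero3 ?P" unfolding nonzero3_def using a0 by simp
    moreover have "incident l ?P" unfolding incident_def la by (simp add: algebra_simps)
    moreover have "incident (phi_line q l) ?P" unfolding incident_def phi1 by (simp add: algebra_simps)
    moreover have "incident (phi_line q (phi_line q l)) ?P"
      unfolding incident_def phi_line_def la using qpos D0 zero_power[OF qpos] unfolding D_def by (simp add: algebra_simps)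
    ultimately show "concurrent3 l (phi_line q l) (phi_line q (phi_line q l))"
      unfolding concurrent3_def by blast
  qed
  have pw: "y * y ^ q * (y ^ q) ^ q = y ^ n" for y :: 'a
  proof -
    have "(y ^ q) ^ q = y ^ (q^2)" by (simp add: power_mult[symmetric] power2_eq_square)
    moreover have "y ^ n = y ^ (q^2) * y ^ q * y" unfolding n_def by (simp only: power_add power_one_right)
    ultimately show ?thesis by (simp add: mult_ac)
  qed
  have Dn: "D = a ^ n + b ^ n" unfolding D_def by (simp only: pw)
  have bdef: "b = - (a * \<theta> * x / x ^ q)" using eqX xq by (simp add: field_simps eq_neg_iff_add_eq_0)
  have qn: "q * n = q ^ 3 + (q^2 + q)" unfolding n_def by (simp add: algebra_simps power2_eq_square power3_eq_cube)
  have xqn: "(x ^ q) ^ n = x ^ n"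
  proof -
    have "(x ^ q) ^ n = x ^ (q ^ 3) * x ^ (q^2 + q)"
      by (simp only: power_mult[symmetric] qn power_add)
    also have "\<dots> = x * x ^ (q^2 + q)" using fin_field_pow_card[of x] assms(2) by simp
    finally show ?thesis unfolding n_def by simp
  qed
  have odd: "odd n" unfolding n_def by (simp add: power2_eq_square)
  have bn: "b ^ n = - (a ^ n * \<theta> ^ n)"
  proof -
    have "b ^ n = - ((a * \<theta> * x / x ^ q) ^ n)" unfolding bdef using odd by (rule power_minus_odd)
    also have "(a * \<theta> * x / x ^ q) ^ n = a ^ n * \<theta> ^ n * x ^ n / (x ^ q) ^ n"
      by (simp only: power_mult_distrib power_divide)
    also have "\<dots> = a ^ n * \<theta> ^ n" using xqn x0 by simp
    finally show ?thesis .
  qed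
  have "D = a ^ n * (1 - \<theta> ^ n)" using Dn bn by (simp add: algebra_simps)
  then have "D = 0 \<longleftrightarrow> norm3 q \<theta> = 1" unfolding norm3_def n_def[symmetric] using a0 by simp
  then show "if norm3 q \<theta> = 1 then type_II q l else type_III q l"
    unfolding type_II_def type_III_def using notI conc by simp
qed

end
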